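(* Let $n\in\mathbb N$, $w>0$, and $\overrightarrow{P}=(p_1,\dots,p_n)$ with $1\le p_1\le p_2\le\cdots\le p_n<\infty$. Let $\Delta^{\overrightarrow{P}}(\mathbb R^n)$ be the set of all bounded measurable functions $f:\mathbb R^n\to\mathbb R$ such that $\|(f(x_{\mathbf k}))_{\mathbf k\in\mathbb Z^n}\|_{\ell^{\overrightarrow P}_w}<\infty$ for every relatively separated set $(x_{\mathbf k})_{\mathbf k\in\mathbb Z^n}$ in $\mathbb R^n$. Then $\Delta^{\overrightarrow{P}}(\mathbb R^n)$ is a proper subspace of $L^{\overrightarrow{P}}(\mathbb R^n)$, and the map $\|f\|_{\Delta^{\overrightarrow P}}:=\big\|\big(f(\tfrac{\mathbf k}{w})\big)_{\mathbf k\in\mathbb Z^n}\big\|_{\ell^{\overrightarrow P}_w}$ is a seminorm on $\Delta^{\overrightarrow{P}}(\mathbb R^n)$.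
   Context: The mixed norm Lebesgue space $L^{\overrightarrow P}(\mathbb R^n)$ consists of measurable $f:\mathbb R^n\to\mathbb R$ with $\|f\|_{\overrightarrow P}=\Big(\int_{\mathbb R}\cdots\Big(\int_{\mathbb R}\Big(\int_{\mathbb R}|f(x_1,\dots,x_n)|^{p_1}dx_1\Big)^{p_2/p_1}dx_2\Big)^{p_3/p_2}\cdots dx_n\Big)^{1/p_n}<\infty$. For a sequence $x=(x(k_1,\dots,k_n))_{\mathbf k\in\mathbb Z^n}$, the weighted mixed norm is $\|x\|_{\ell^{\overrightarrow P}_w}=\Big(\frac1w\sum_{k_n\in\mathbb Z}\cdots\Big(\frac1w\sum_{k_2\in\mathbb Z}\Big(\frac1w\sum_{k_1\in\mathbb Z}|x(k_1,\dots,k_n)|^{p_1}\Big)^{p_2/p_1}\Big)^{p_3/p_2}\cdots\Big)^{1/p_n}$. A countable set $\Gamma\subset\mathbb R^n$ is relatively separated with gap $\kappa>0$ if $\inf_{\mathbf x\in\mathbb R^n}\sum_{\gamma\in\Gamma}\chi_{B(\gamma;\kappa/2)}(\mathbf x)\ge1$ and $\sup_{\mathbf x\in\mathbb R^n}\sum_{\gamma\in\Gamma}\chi_{B(\gamma;\kappa/2)}(\mathbf x)<\infty$, where $B(\gamma;r)$ is the open cube (ball for $\|\cdot\|_\infty$) centered at $\gamma$ with side length $2r$; a relatively separated set $(x_{\mathbf k})_{\mathbf k\in\mathbb Z^n}$ means such a set indexed by $\mathbb Z^n$. *)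

theory Defs
  imports "HOL-Analysis.Analysis"
begin

text \<open>Points of R^n are functions nat => real, extensional outside {..<n}
  (coordinates x_1..x_n are the indices 0..n-1). Exponents p_1..p_n are p 0 .. p (n-1).\<close>

definition epowr :: "ennreal \<Rightarrow> real \<Rightarrow> ennreal" where
  "epowr a r = (if a = \<infinity> then \<infinity> else ennreal (enn2real a powr r))"

definition Rn :: "nat \<Rightarrow> (nat \<Rightarrow> real) set" where
  "Rn n = PiE {..<n} (\<lambda>_. UNIV)"

definition Zn :: "nat \<Rightarrow> (nat \<Rightarrow> int) set" where
  "Zn n = PiE {..<n} (\<lambda>_. UNIV)"

definition lebRn :: "nat \<Rightarrow> (nat \<Rightarrow> real) measure" where
  "lebRn n = PiM {..<n} (\<lambda>_. lborel)"

text \<open>Iterated mixed norm: stage j integrates out coordinate j (innermost first).\<close>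
fun mixed_aux :: "(nat \<Rightarrow> real) \<Rightarrow> ((nat \<Rightarrow> real) \<Rightarrow> real) \<Rightarrow> nat \<Rightarrow> (nat \<Rightarrow> real) \<Rightarrow> ennreal" where
  "mixed_aux p f 0 x = ennreal \<bar>f x\<bar>"
| "mixed_aux p f (Suc j) x =
     epowr (\<integral>\<^sup>+ t. epowr (mixed_aux p f j (x(j := t))) (p j) \<partial>lborel) (1 / p j)"

definition mixed_norm :: "nat \<Rightarrow> (nat \<Rightarrow> real) \<Rightarrow> ((nat \<Rightarrow> real) \<Rightarrow> real) \<Rightarrow> ennreal" where
  "mixed_norm n p f = mixed_aux p f n (\<lambda>_. undefined)"

definition LP :: "nat \<Rightarrow> (nat \<Rightarrow> real) \<Rightarrow> ((nat \<Rightarrow> real) \<Rightarrow> real) set" where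
  "LP n p = {f. f \<in> borel_measurable (lebRn n) \<and> mixed_norm n p f < \<infinity>}"

fun wseq_aux :: "real \<Rightarrow> (nat \<Rightarrow> real) \<Rightarrow> ((nat \<Rightarrow> int) \<Rightarrow> real) \<Rightarrow> nat \<Rightarrow> (nat \<Rightarrow> int) \<Rightarrow> ennreal" where
  "wseq_aux w p c 0 k = ennreal \<bar>c k\<bar>"
| "wseq_aux w p c (Suc j) k =
     epowr (ennreal (1 / w) *
            (\<integral>\<^sup>+ t. epowr (wseq_aux w p c j (k(j := t))) (p j) \<partial>count_space UNIV)) (1 / p j)"

definition wseq_norm :: "nat \<Rightarrow> real \<Rightarrow> (nat \<Rightarrow> real) \<Rightarrow> ((nat \<Rightarrow> int) \<Rightarrow> real) \<Rightarrow> ennreal" where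
  "wseq_norm n w p c = wseq_aux w p c n (\<lambda>_. undefined)"

definition cube :: "nat \<Rightarrow> (nat \<Rightarrow> real) \<Rightarrow> real \<Rightarrow> (nat \<Rightarrow> real) set" where
  "cube n g r = {y \<in> Rn n. \<forall>i<n. \<bar>y i - g i\<bar> < r}"

text \<open>Relatively separated family indexed by Z^n (sums counted with multiplicity over indices).\<close>
definition rel_separated :: "nat \<Rightarrow> ((nat \<Rightarrow> int) \<Rightarrow> (nat \<Rightarrow> real)) \<Rightarrow> bool" where
  "rel_separated n X \<longleftrightarrow> (\<forall>k\<in>Zn n. X k \<in> Rn n) \<and>
     (\<exists>\<kappa>>0. (\<forall>y\<in>Rn n. 1 \<le> card {k\<in>Zn n. y \<in> cube n (X k) (\<kappa>/2)}) \<and>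
            (\<exists>N::nat. \<forall>y\<in>Rn n. finite {k\<in>Zn n. y \<in> cube n (X k) (\<kappa>/2)} \<and>
                                card {k\<in>Zn n. y \<in> cube n (X k) (\<kappa>/2)} \<le> N))"

definition Delta :: "nat \<Rightarrow> real \<Rightarrow> (nat \<Rightarrow> real) \<Rightarrow> ((nat \<Rightarrow> real) \<Rightarrow> real) set" where
  "Delta n w p = {f. f \<in> borel_measurable (lebRn n) \<and> (\<exists>B. \<forall>x\<in>Rn n. \<bar>f x\<bar> \<le> B) \<and>
      (\<forall>X. rel_separated n X \<longrightarrow> wseq_norm n w p (\<lambda>k. f (X k)) < \<infinity>)}"

definition delta_norm :: "nat \<Rightarrow> real \<Rightarrow> (nat \<Rightarrow> real) \<Rightarrow> ((nat \<Rightarrow> real) \<Rightarrow> real) \<Rightarrow> ennreal" where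
  "delta_norm n w p f =
     wseq_norm n w p (\<lambda>k. f (\<lambda>i. if i < n then real_of_int (k i) / w else undefined))"

end

theory Submission
  imports Defs
begin


lemma epowr_ennreal: "0 \<le> a \<Longrightarrow> epowr (ennreal a) r = ennreal (a powr r)"
  by (simp add: epowr_def)

lemma epowr_top[simp]: "epowr top r = top"
  by (simp add: epowr_def)

lemma epowr_0[simp]: "epowr 0 r = 0"
  by (simp add: epowr_def)

lemma epowr_mono:
  assumes "0 \<le> r" "a \<le> b" shows "epowr a r \<le> epowr b r"
proof (cases "b = \<infinity>")
  case True then show ?thesis by simp
next
  case False
  then have "a \<noteq> \<infinity>" using assms top.extremum_unique by fastforce
  have "enn2real a \<le> enn2real b" using assms False by (intro enn2real_mono) (auto simp: top.not_eq_extremum)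
  then have "enn2real a powr r \<le> enn2real b powr r"
    using assms by (intro powr_mono2) auto
  then show ?thesis using False \<open>a \<noteq> \<infinity>\<close> by (simp add: epowr_def)
qed

lemma epowr_mult:
  assumes "0 \<le> a" "0 < r"
  shows "epowr (ennreal a * x) r = ennreal (a powr r) * epowr x r"
proof (cases "x = \<infinity>")
  case True
  show ?thesis
  proof (cases "a = 0")
    case True with \<open>x = \<infinity>\<close> show ?thesis by simp
  next
    case False
    then have "a > 0" using assms by simp
    then show ?thesis using True by (simp add: ennreal_mult_top ennreal_top_mult)
  qed
next
  case False
  then obtain y where y: "x = ennreal y" "0 \<le> y" by (cases x) auto
  then show ?thesis using assms
    by (simp add: epowr_def ennreal_mult[symmetric] powr_mult ennreal_mult_eq_top_iff)
qed

lemma epowr_epowr: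
  assumes "0 < r" shows "epowr (epowr x r) (1/r) = x"
proof (cases "x = \<infinity>")
  case True then show ?thesis by simp
next
  case False
  then obtain y where y: "x = ennreal y" "0 \<le> y" by (cases x) auto
  then show ?thesis using assms by (simp add: epowr_def powr_powr)
qed



lemma mink_pt_pos:
  fixes a b x y p :: real
  assumes p: "1 \<le> p" and ab: "0 < a" "0 < b" and xy: "0 < x" "0 < y"
  shows "(x+y) powr p \<le> (a+b) powr (p-1) * (a powr (1-p) * x powr p + b powr (1-p) * y powr p)"
proof -
  define t where "t = b / (a+b)"
  have t01: "0 \<le> t" "t \<le> 1" using ab by (auto simp: t_def)
  have 1: "1 - t = a/(a+b)" using ab by (simp add: t_def field_simps)
  have cv: "((1 - t) *\<^sub>R (x/a) + t *\<^sub>R (y/b)) powr p \<le> (1-t) * (x/a) powr p + t * (y/b) powr p"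
    using convex_onD[OF powr_convex[OF p] t01, of "x/a" "y/b"] xy ab by auto
  have eq: "(1 - t) *\<^sub>R (x/a) + t *\<^sub>R (y/b) = (x+y)/(a+b)"
  proof -
    have "(1-t)*(x/a) = x/(a+b)" using ab by (simp add: 1)
    moreover have "t*(y/b) = y/(a+b)" using ab by (simp add: t_def)
    ultimately
    show ?thesis by (simp add: add_divide_distrib)
  qed
  have "(x+y) powr p = (a+b) powr p * ((x+y)/(a+b)) powr p"
    using ab xy by (simp add: powr_divide)
  also have "\<dots> \<le> (a+b) powr p * ((1-t) * (x/a) powr p + t * (y/b) powr p)"
    using cv eq by (intro mult_left_mono) auto
  also have "\<dots> = (a+b) powr (p-1) * (a powr (1-p) * x powr p + b powr (1-p) * y powr p)"
  proof -
    have e1: "(a+b) powr p * (a/(a+b)) = (a+b) powr (p-1) * a"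
      using ab by (simp add: powr_diff field_simps)
    have e2: "(a+b) powr p * (b/(a+b)) = (a+b) powr (p-1) * b"
      using ab by (simp add: powr_diff field_simps)
    have e3: "a * (x/a) powr p = a powr (1-p) * x powr p" using ab xy by (simp add: powr_diff powr_divide)
    have e4: "b * (y/b) powr p = b powr (1-p) * y powr p" using ab xy by (simp add: powr_diff powr_divide)
    have "(a+b) powr p * ((1-t) * (x/a) powr p + t * (y/b) powr p)
       = ((a+b) powr p * (a/(a+b))) * (x/a) powr p + ((a+b) powr p * (b/(a+b))) * (y/b) powr p"
      by (simp only: 1) (simp add: t_def algebra_simps)
    also have "\<dots> = (a+b) powr (p-1) * (a * (x/a) powr p + b * (y/b) powr p)"
      by (simp only: e1 e2) (simp add: algebra_simps)
    finally show ?thesis by (simp add: e3 e4)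
  qed
  finally show ?thesis .
qed

lemma mink_coef_ge1:
  fixes a b p :: real
  assumes p: "1 \<le> p" and ab: "0 < a" "0 < b"
  shows "1 \<le> (a+b) powr (p-1) * b powr (1-p)"
proof -
  have "(a+b) powr (p-1) * b powr (1-p) = ((a+b)/b) powr (p-1)"
    using ab by (simp add: powr_divide powr_minus_divide divide_powr_uminus flip: powr_minus)
  also have "1 \<le> \<dots>" using ab p by (intro ge_one_powr_ge_zero) auto
  finally show ?thesis by simp
qed

lemma mink_pt:
  fixes a b x y p :: real
  assumes p: "1 \<le> p" and ab: "0 < a" "0 < b" and xy: "0 \<le> x" "0 \<le> y"
  shows "(x+y) powr p \<le> (a+b) powr (p-1) * (a powr (1-p) * x powr p + b powr (1-p) * y powr p)"
proof -
  have c1: "1 \<le> (a+b) powr (p-1) * b powr (1-p)" using mink_coef_ge1[OF p ab] .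
  have c2: "1 \<le> (a+b) powr (p-1) * a powr (1-p)" using mink_coef_ge1[OF p ab(2,1)] by (simp add: add.commute)
  show ?thesis
  proof (cases "x = 0")
    case True
    have "y powr p \<le> ((a+b) powr (p-1) * b powr (1-p)) * y powr p"
      using c1 by (simp add: mult_le_cancel_right1)
    then show ?thesis using True by (simp add: algebra_simps)
  next
    case x: False
    show ?thesis
    proof (cases "y = 0")
      case True
      have "x powr p \<le> ((a+b) powr (p-1) * a powr (1-p)) * x powr p"
        using c2 by (simp add: mult_le_cancel_right1)
      then show ?thesis using True by (simp add: algebra_simps)
    next
      case False
      then show ?thesis using mink_pt_pos[OF p ab, of x y] x xy by simp
    qed
  qed
qed



lemma count_space_le_integral:
  fixes f :: "'a \<Rightarrow> ennreal"
  shows "f t \<le> (\<integral>\<^sup>+x. f x \<partial>count_space UNIV)"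
proof -
  have "(\<integral>\<^sup>+x. f x * indicator {t} x \<partial>count_space UNIV) \<le> (\<integral>\<^sup>+x. f x \<partial>count_space UNIV)"
    by (intro nn_integral_mono) (simp split: split_indicator)
  then show ?thesis by simp
qed

lemma minkowski_count:
  fixes b c :: "'a \<Rightarrow> ennreal" and p :: real
  assumes p: "1 \<le> p"
  shows "epowr (\<integral>\<^sup>+t. epowr (b t + c t) p \<partial>count_space UNIV) (1/p)
     \<le> epowr (\<integral>\<^sup>+t. epowr (b t) p \<partial>count_space UNIV) (1/p) + epowr (\<integral>\<^sup>+t. epowr (c t) p \<partial>count_space UNIV) (1/p)"
    (is "epowr ?Ibc _ \<le> epowr ?Ib _ + epowr ?Ic _")
proof (cases "?Ib = top \<or> ?Ic = top")
  case True then show ?thesis by auto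
next
  case False
  then have Ibf: "?Ib \<noteq> top" and Icf: "?Ic \<noteq> top" by auto
  have bf: "b t \<noteq> top" for t
  proof
    assume "b t = top"
    then have "top \<le> ?Ib" using count_space_le_integral[of "\<lambda>t. epowr (b t) p" t] by simp
    then show False using Ibf by (simp add: top_unique)
  qed
  have cf: "c t \<noteq> top" for t
  proof
    assume "c t = top"
    then have "top \<le> ?Ic" using count_space_le_integral[of "\<lambda>t. epowr (c t) p" t] by simp
    then show False using Icf by (simp add: top_unique)
  qed
  define \<beta> where "\<beta> t = enn2real (b t)" for t
  define \<gamma> where "\<gamma> t = enn2real (c t)" for t
  have b_eq: "b t = ennreal (\<beta> t)" for t using bf by (simp add: \<beta>_def ennreal_enn2real_if)
  have c_eq: "c t = ennreal (\<gamma> t)" for t using cf by (simp add: \<gamma>_def ennreal_enn2real_if)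
  have \<beta>0: "0 \<le> \<beta> t" for t by (simp add: \<beta>_def)
  have \<gamma>0: "0 \<le> \<gamma> t" for t by (simp add: \<gamma>_def)
  define ib where "ib = enn2real ?Ib"
  define ic where "ic = enn2real ?Ic"
  have Ib_eq: "?Ib = ennreal ib" using Ibf by (simp add: ib_def ennreal_enn2real_if)
  have Ic_eq: "?Ic = ennreal ic" using Icf by (simp add: ic_def ennreal_enn2real_if)
  have ib0: "0 \<le> ib" "0 \<le> ic" by (auto simp: ib_def ic_def)
  define A where "A = ib powr (1/p)"
  define B where "B = ic powr (1/p)"
  have A0: "0 \<le> A" "0 \<le> B" by (auto simp: A_def B_def)
  have lhsA: "epowr ?Ib (1/p) = ennreal A" using ib0 by (simp add: Ib_eq epowr_ennreal A_def)
  have lhsB: "epowr ?Ic (1/p) = ennreal B" using ib0 by (simp add: Ic_eq epowr_ennreal B_def)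
  show ?thesis
  proof (cases "ib = 0")
    case True
    have "b t = 0" for t
    proof -
      have "epowr (b t) p \<le> ?Ib" by (rule count_space_le_integral)
      then have "epowr (b t) p \<le> ennreal ib" by (simp only: Ib_eq)
      then have "ennreal (\<beta> t powr p) \<le> 0" using True \<beta>0 by (simp add: b_eq epowr_ennreal)
      then have "\<beta> t powr p = 0" using \<beta>0 by simp
      then show ?thesis using b_eq by simp
    qed
    then show ?thesis by (simp add: add_increasing)
  next
    case ibnz: False
    show ?thesis
    proof (cases "ic = 0")
      case True
      have "c t = 0" for t
      proof -
        have "epowr (c t) p \<le> ?Ic" by (rule count_space_le_integral)
      then have "epowr (c t) p \<le> ennreal ic" by (simp only: Ic_eq)
        then have "ennreal (\<gamma> t powr p) \<le> 0" using True \<gamma>0 by (simp add: c_eq epowr_ennreal)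
        then have "\<gamma> t powr p = 0" using \<gamma>0 by simp
        then show ?thesis using c_eq by simp
      qed
      then show ?thesis by (simp add: add_increasing2)
    next
      case icnz: False
      have Apos: "0 < A" "0 < B" using ibnz icnz ib0 by (auto simp: A_def B_def)
      have Ap: "A powr p = ib" "B powr p = ic" using ib0 p ibnz icnz
        by (auto simp: A_def B_def powr_powr)
      define C1 where "C1 = (A+B) powr (p-1) * A powr (1-p)"
      define C2 where "C2 = (A+B) powr (p-1) * B powr (1-p)"
      have C0: "0 \<le> C1" "0 \<le> C2" by (auto simp: C1_def C2_def)
      have "?Ibc = (\<integral>\<^sup>+t. ennreal ((\<beta> t + \<gamma> t) powr p) \<partial>count_space UNIV)"
        using \<beta>0 \<gamma>0 by (simp add: b_eq c_eq epowr_ennreal flip: ennreal_plus)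
      also have "\<dots> \<le> (\<integral>\<^sup>+t. ennreal C1 * ennreal (\<beta> t powr p) + ennreal C2 * ennreal (\<gamma> t powr p) \<partial>count_space UNIV)"
      proof (intro nn_integral_mono)
        fix t
        have "(\<beta> t + \<gamma> t) powr p \<le> C1 * \<beta> t powr p + C2 * \<gamma> t powr p"
          using mink_pt[OF p Apos \<beta>0 \<gamma>0, of t t] by (simp add: C1_def C2_def algebra_simps)
        then show "ennreal ((\<beta> t + \<gamma> t) powr p) \<le> ennreal C1 * ennreal (\<beta> t powr p) + ennreal C2 * ennreal (\<gamma> t powr p)"
          using C0 by (simp add: ennreal_leI flip: ennreal_mult ennreal_plus)
      qed
      also have "\<dots> = ennreal C1 * ?Ib + ennreal C2 * ?Ic"
        using \<beta>0 \<gamma>0 by (simp add: nn_integral_add nn_integral_cmult b_eq c_eq epowr_ennreal)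
      also have "\<dots> = ennreal ((A+B) powr p)"
      proof -
        have "C1 * ib + C2 * ic = (A+B) powr (p-1) * (A + B)"
        proof -
          have h1: "A powr p * A powr (1-p) = A" "B powr p * B powr (1-p) = B"
            using Apos by (simp_all flip: powr_add)
          have "C1 * ib = A * (A+B) powr (p-1)"
            unfolding C1_def Ap[symmetric] using h1(1) by (metis mult.assoc mult.commute)
          moreover have "C2 * ic = B * (A+B) powr (p-1)"
            unfolding C2_def Ap[symmetric] using h1(2) by (metis mult.assoc mult.commute)
          ultimately show ?thesis by (simp add: algebra_simps)
        qed
        also have "\<dots> = (A+B) powr p" using Apos by (simp add: powr_diff)
        finally have "C1 * ib + C2 * ic = (A+B) powr p" .
        then show ?thesis using C0 ib0 by (simp add: Ib_eq Ic_eq flip: ennreal_mult ennreal_plus)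
      qed
      finally have le: "?Ibc \<le> ennreal ((A+B) powr p)" .
      have "epowr ?Ibc (1/p) \<le> epowr (ennreal ((A+B) powr p)) (1/p)"
        using p by (intro epowr_mono le) auto
      also have "\<dots> = ennreal (A + B)" using Apos p by (simp add: epowr_ennreal powr_powr)
      finally show ?thesis using A0 by (simp add: lhsA lhsB ennreal_plus)
    qed
  qed
qed



lemma wseq_mono:
  assumes "\<forall>i<j. 0 < p i" "\<And>k. \<bar>c k\<bar> \<le> \<bar>d k\<bar>"
  shows "wseq_aux w p c j k \<le> wseq_aux w p d j k"
  using assms(1)
proof (induction j arbitrary: k)
  case 0 then show ?case using assms(2) by (simp add: ennreal_leI)
next
  case (Suc j)
  have pj: "0 < p j" using Suc.prems by auto
  show ?case
    using Suc.IH Suc.prems pj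
    by (auto simp: intro!: epowr_mono mult_left_mono nn_integral_mono)
qed

lemma wseq_hom:
  assumes "\<forall>i<j. 0 < p i"
  shows "wseq_aux w p (\<lambda>k. a * c k) j k = ennreal \<bar>a\<bar> * wseq_aux w p c j k"
  using assms
proof (induction j arbitrary: k)
  case 0 then show ?case by (simp add: abs_mult ennreal_mult)
next
  case (Suc j)
  have pj: "0 < p j" using Suc.prems by auto
  have "wseq_aux w p (\<lambda>k. a * c k) (Suc j) k =
     epowr (ennreal (1 / w) * (\<integral>\<^sup>+ t. ennreal (\<bar>a\<bar> powr p j) * epowr (wseq_aux w p c j (k(j := t))) (p j) \<partial>count_space UNIV)) (1 / p j)"
    using Suc pj by (simp add: epowr_mult)
  also have "\<dots> = epowr (ennreal (\<bar>a\<bar> powr p j) * (ennreal (1 / w) * (\<integral>\<^sup>+ t. epowr (wseq_aux w p c j (k(j := t))) (p j) \<partial>count_space UNIV))) (1 / p j)"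
    by (simp add: nn_integral_cmult mult.left_commute)
  also have "\<dots> = ennreal ((\<bar>a\<bar> powr p j) powr (1 / p j)) * wseq_aux w p c (Suc j) k"
    using pj by (simp add: epowr_mult)
  also have "(\<bar>a\<bar> powr p j) powr (1 / p j) = \<bar>a\<bar>"
    using pj by (simp add: powr_powr)
  finally show ?case .
qed

lemma wseq_triangle:
  assumes "\<forall>i<j. 1 \<le> p i" "0 < w"
  shows "wseq_aux w p (\<lambda>k. c k + d k) j k \<le> wseq_aux w p c j k + wseq_aux w p d j k"
  using assms(1)
proof (induction j arbitrary: k)
  case 0 then show ?case by (simp add: ennreal_leI abs_triangle_ineq flip: ennreal_plus)
next
  case (Suc j)
  have pj: "1 \<le> p j" using Suc.prems by auto
  define U where "U t = wseq_aux w p c j (k(j := t))" for t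
  define V where "V t = wseq_aux w p d j (k(j := t))" for t
  define S where "S f = (\<integral>\<^sup>+ t. epowr (f t) (p j) \<partial>count_space UNIV)" for f :: "int \<Rightarrow> ennreal"
  have "wseq_aux w p (\<lambda>k. c k + d k) (Suc j) k \<le> epowr (ennreal (1 / w) * S (\<lambda>t. U t + V t)) (1 / p j)"
    unfolding S_def U_def V_def using Suc pj
    by (auto intro!: epowr_mono mult_left_mono nn_integral_mono)
  also have "\<dots> = ennreal ((1/w) powr (1 / p j)) * epowr (S (\<lambda>t. U t + V t)) (1 / p j)"
    using pj assms(2) by (simp add: epowr_mult)
  also have "\<dots> \<le> ennreal ((1/w) powr (1 / p j)) * (epowr (S U) (1 / p j) + epowr (S V) (1 / p j))"
    unfolding S_def by (intro mult_left_mono minkowski_count pj) auto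
  also have "\<dots> = epowr (ennreal (1 / w) * S U) (1 / p j) + epowr (ennreal (1 / w) * S V) (1 / p j)"
    using pj assms(2) by (simp add: epowr_mult distrib_left)
  also have "\<dots> = wseq_aux w p c (Suc j) k + wseq_aux w p d (Suc j) k"
    by (simp add: S_def U_def V_def)
  finally show ?case .
qed



lemma floor_set_eq:
  assumes "0 < w"
  shows "{x::real. \<lfloor>w * x\<rfloor> = m} = {real_of_int m / w ..< (real_of_int m + 1) / w}"
  using assms by (auto simp: floor_eq_iff field_simps)

lemma lborel_floor_integral:
  fixes \<phi> :: "int \<Rightarrow> ennreal"
  assumes w: "0 < w"
  shows "(\<integral>\<^sup>+t. \<phi> \<lfloor>w * t\<rfloor> \<partial>lborel) = ennreal (1/w) * (\<integral>\<^sup>+m. \<phi> m \<partial>count_space UNIV)"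
proof -
  define S where "S m = {real_of_int m / w ..< (real_of_int m + 1) / w}" for m
  have memS: "t \<in> S m \<longleftrightarrow> \<lfloor>w * t\<rfloor> = m" for t m
    unfolding S_def floor_set_eq[OF w, symmetric] by simp
  have pt: "\<phi> \<lfloor>w * t\<rfloor> = (\<integral>\<^sup>+m. \<phi> m * indicator (S m) t \<partial>count_space UNIV)" for t
  proof -
    have "(\<integral>\<^sup>+m. \<phi> m * indicator (S m) t \<partial>count_space UNIV) = (\<integral>\<^sup>+m. \<phi> m * indicator {\<lfloor>w * t\<rfloor>} m \<partial>count_space UNIV)"
      by (intro nn_integral_cong) (auto simp: memS split: split_indicator)
    then show ?thesis by simp
  qed
  have "(\<integral>\<^sup>+t. \<phi> \<lfloor>w * t\<rfloor> \<partial>lborel) = (\<integral>\<^sup>+t. \<integral>\<^sup>+m. \<phi> m * indicator (S m) t \<partial>count_space UNIV \<partial>lborel)"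
    by (simp add: pt)
  also have "\<dots> = (\<integral>\<^sup>+m. \<integral>\<^sup>+t. \<phi> m * indicator (S m) t \<partial>lborel \<partial>count_space UNIV)"
    by (rule nn_integral_count_space_nn_integral) (simp_all add: S_def)
  also have "\<dots> = (\<integral>\<^sup>+m. \<phi> m * ennreal (1/w) \<partial>count_space UNIV)"
  proof (intro nn_integral_cong)
    fix m
    have "(\<integral>\<^sup>+t. \<phi> m * indicator (S m) t \<partial>lborel) = \<phi> m * emeasure lborel (S m)"
      by (rule nn_integral_cmult_indicator) (simp add: S_def)
    also have "emeasure lborel (S m) = ennreal (1/w)"
    proof -
      have le: "real_of_int m / w \<le> (real_of_int m + 1) / w" using w by (simp add: divide_right_mono)
      have "(real_of_int m + 1) / w - real_of_int m / w = 1 / w" using w by (simp add: field_simps)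
      then show ?thesis using le by (simp add: S_def)
    qed
    finally show "(\<integral>\<^sup>+t. \<phi> m * indicator (S m) t \<partial>lborel) = \<phi> m * ennreal (1/w)" .
  qed
  also have "\<dots> = ennreal (1/w) * (\<integral>\<^sup>+m. \<phi> m \<partial>count_space UNIV)"
    by (simp add: nn_integral_multc mult.commute)
  finally show ?thesis .
qed



lemma mixed_wseq:
  assumes w: "0 < w" and j: "j0 \<le> j" "j \<le> n"
    and base: "\<And>x k. (\<forall>i. j0 \<le> i \<and> i < n \<longrightarrow> k i = \<lfloor>w * x i\<rfloor>) \<Longrightarrow> (\<forall>i. n \<le> i \<longrightarrow> k i = undefined)
        \<Longrightarrow> mixed_aux p F j0 x = wseq_aux w p c j0 k"
  shows "(\<forall>i. j \<le> i \<and> i < n \<longrightarrow> k i = \<lfloor>w * x i\<rfloor>) \<Longrightarrow> (\<forall>i. n \<le> i \<longrightarrow> k i = undefined)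
        \<Longrightarrow> mixed_aux p F j x = wseq_aux w p c j k"
  using j
proof (induction j arbitrary: x k)
  case 0 then show ?case using base by simp
next
  case (Suc j)
  show ?case
  proof (cases "j0 = Suc j")
    case True then show ?thesis using base Suc.prems by simp
  next
    case False
    then have jj: "j0 \<le> j" "j < n" using Suc.prems by auto
    have IH: "mixed_aux p F j (x(j := t)) = wseq_aux w p c j (k(j := \<lfloor>w * t\<rfloor>))" for t
    proof (rule Suc.IH)
      show "\<forall>i. j \<le> i \<and> i < n \<longrightarrow> (k(j := \<lfloor>w * t\<rfloor>)) i = \<lfloor>w * (x(j := t)) i\<rfloor>"
        using Suc.prems by (auto simp: Suc_le_eq)
      show "\<forall>i. n \<le> i \<longrightarrow> (k(j := \<lfloor>w * t\<rfloor>)) i = undefined"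
        using Suc.prems jj by auto
    qed (use jj in auto)
    have "mixed_aux p F (Suc j) x =
        epowr (\<integral>\<^sup>+ t. epowr (wseq_aux w p c j (k(j := \<lfloor>w * t\<rfloor>))) (p j) \<partial>lborel) (1 / p j)"
      by (simp add: IH)
    also have "\<dots> = epowr (ennreal (1/w) * (\<integral>\<^sup>+ m. epowr (wseq_aux w p c j (k(j := m))) (p j) \<partial>count_space UNIV)) (1 / p j)"
      using lborel_floor_integral[OF w, of "\<lambda>m. epowr (wseq_aux w p c j (k(j := m))) (p j)"] by simp
    also have "\<dots> = wseq_aux w p c (Suc j) k" by simp
    finally show ?thesis .
  qed
qed

lemma mixed_mono:
  assumes "\<forall>i<j. 0 < p i" "j \<le> n" "\<And>x. (\<forall>i\<ge>n. x i = undefined) \<Longrightarrow> \<bar>f x\<bar> \<le> \<bar>g x\<bar>"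
  shows "(\<forall>i\<ge>n. x i = undefined) \<Longrightarrow> mixed_aux p f j x \<le> mixed_aux p g j x"
  using assms(1,2)
proof (induction j arbitrary: x)
  case 0 then show ?case using assms(3) by (simp add: ennreal_leI)
next
  case (Suc j)
  have pj: "0 < p j" using Suc.prems by auto
  have "mixed_aux p f j (x(j := t)) \<le> mixed_aux p g j (x(j := t))" for t
    using Suc by auto
  then show ?case
    using pj by (auto intro!: epowr_mono nn_integral_mono)
qed



lemma Rn_iff: "x \<in> Rn n \<longleftrightarrow> (\<forall>i\<ge>n. x i = undefined)"
  by (auto simp: Rn_def PiE_iff extensional_def)

lemma Zn_iff: "k \<in> Zn n \<longleftrightarrow> (\<forall>i\<ge>n. k i = undefined)"
  by (auto simp: Zn_def PiE_iff extensional_def)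

lemma floor_close:
  fixes a b :: real
  assumes "\<bar>a - b\<bar> < 1" "\<lfloor>b\<rfloor> = k"
  shows "\<lfloor>a\<rfloor> - 1 \<le> k \<and> k \<le> \<lfloor>a\<rfloor> + 1"
proof -
  have fa: "real_of_int \<lfloor>a\<rfloor> \<le> a" "a < real_of_int \<lfloor>a\<rfloor> + 1" by linarith+
  have fb: "real_of_int k \<le> b" "b < real_of_int k + 1" using assms(2) by linarith+
  have "real_of_int \<lfloor>a\<rfloor> < real_of_int (k + 2)" using fa fb assms(1) by simp linarith
  then have 1: "\<lfloor>a\<rfloor> < k + 2" by (simp only: of_int_less_iff)
  have "real_of_int (k - 2) < real_of_int \<lfloor>a\<rfloor>" using fa fb assms(1) by simp linarith
  then have 2: "k - 2 < \<lfloor>a\<rfloor>" by (simp only: of_int_less_iff)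
  show ?thesis using 1 2 by linarith
qed

lemma scale_abs_lt:
  fixes w y x :: real
  assumes "0 < w"
  shows "\<bar>y - x\<bar> < 1 / w \<longleftrightarrow> \<bar>w * y - w * x\<bar> < 1"
proof -
  have "\<bar>w * y - w * x\<bar> = w * \<bar>y - x\<bar>" using assms by (simp add: abs_mult flip: right_diff_distrib)
  then show ?thesis using assms by (simp add: pos_less_divide_eq mult.commute)
qed

lemma rel_sep_grid:
  assumes w: "0 < w" and X: "\<And>k. k \<in> Zn n \<Longrightarrow> X k \<in> Rn n \<and> (\<forall>i<n. \<lfloor>w * X k i\<rfloor> = k i)"
  shows "rel_separated n X"
  unfolding rel_separated_def
proof (intro conjI exI[of _ "2/w"] exI[of _ "3^n"] ballI)
  show "X k \<in> Rn n" if "k \<in> Zn n" for k using X that by blast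
  show "0 < 2/w" using w by simp
  fix y assume y: "y \<in> Rn n"
  define S where "S = {k \<in> Zn n. y \<in> cube n (X k) (2 / w / 2)}"
  define P where "P = PiE {..<n} (\<lambda>i. {\<lfloor>w * y i\<rfloor> - 1 .. \<lfloor>w * y i\<rfloor> + 1})"
  have half: "2 / w / 2 = 1 / w" by simp
  have SP: "S \<subseteq> P"
  proof
    fix k assume k: "k \<in> S"
    then have kZ: "k \<in> Zn n" and yc: "y \<in> cube n (X k) (1/w)" by (auto simp: S_def half)
    have "k i \<in> {\<lfloor>w * y i\<rfloor> - 1 .. \<lfloor>w * y i\<rfloor> + 1}" if i: "i < n" for i
    proof -
      have "\<bar>y i - X k i\<bar> < 1/w" using yc i by (auto simp: cube_def)
      then have "\<bar>w * y i - w * X k i\<bar> < 1" using scale_abs_lt[OF w] by blast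
      then show ?thesis using floor_close[of "w * y i" "w * X k i" "k i"] X[OF kZ] i by auto
    qed
    then show "k \<in> P" using kZ by (auto simp: P_def Zn_def PiE_iff)
  qed
  have finP: "finite P" by (simp add: P_def finite_PiE)
  have cardP: "card P = 3^n" by (simp add: P_def card_PiE)
  define ky where "ky = restrict (\<lambda>i. \<lfloor>w * y i\<rfloor>) {..<n}"
  have kyZ: "ky \<in> Zn n" by (simp add: ky_def Zn_def)
  have "ky \<in> S"
  proof -
    have "\<bar>y i - X ky i\<bar> < 1 / w" if i: "i < n" for i
    proof -
      have fl: "\<lfloor>w * X ky i\<rfloor> = \<lfloor>w * y i\<rfloor>" using X[OF kyZ] i by (simp add: ky_def)
      have "\<bar>w * y i - w * X ky i\<bar> < 1" using fl by linarith
      then show ?thesis using scale_abs_lt[OF w] by blast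
    qed
    then show ?thesis using kyZ y by (auto simp: S_def half cube_def)
  qed
  have finS: "finite S" using finite_subset[OF SP finP] .
  have eqS: "{k \<in> Zn n. y \<in> cube n (X k) (2 / w / 2)} = S" by (simp only: S_def)
  show "1 \<le> card {k \<in> Zn n. y \<in> cube n (X k) (2 / w / 2)}"
    unfolding eqS using finS \<open>ky \<in> S\<close> by (simp add: Suc_le_eq card_gt_0_iff) blast
  show "finite {k \<in> Zn n. y \<in> cube n (X k) (2 / w / 2)}"
    unfolding eqS using finS .
  show "card {k \<in> Zn n. y \<in> cube n (X k) (2 / w / 2)} \<le> 3^n"
    unfolding eqS using card_mono[OF finP SP] cardP by simp
qed



lemma exists_half_sup:
  fixes f :: "'a \<Rightarrow> real"
  assumes "Q \<noteq> {}" "\<And>y. y \<in> Q \<Longrightarrow> \<bar>f y\<bar> \<le> B"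
  shows "\<exists>y\<in>Q. \<forall>y'\<in>Q. \<bar>f y'\<bar> \<le> 2 * \<bar>f y\<bar>"
proof -
  define s where "s = (SUP y\<in>Q. \<bar>f y\<bar>)"
  have bdd: "bdd_above ((\<lambda>y. \<bar>f y\<bar>) ` Q)" using assms(2) by (intro bdd_aboveI[of _ B]) auto
  have up: "\<bar>f y'\<bar> \<le> s" if "y' \<in> Q" for y' unfolding s_def using bdd that by (rule cSUP_upper2) simp
  show ?thesis
  proof (cases "s \<le> 0")
    case True
    obtain y where "y \<in> Q" using assms(1) by auto
    then show ?thesis using up True by (intro bexI[of _ y]) (auto, smt (verit) up)
  next
    case False
    then have "s / 2 < s" by simp
    then obtain y where y: "y \<in> Q" "s / 2 < \<bar>f y\<bar>"
      unfolding s_def using less_cSUP_iff[OF assms(1) bdd] by (auto simp: s_def)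
    then show ?thesis using up by (intro bexI[of _ y]) (auto, smt (verit) up)
  qed
qed

lemma Delta_sub_LP:
  assumes w: "0 < w" and p: "\<forall>i<n. 1 \<le> p i" and f: "f \<in> Delta n w p"
  shows "f \<in> LP n p"
proof -
  have fm: "f \<in> borel_measurable (lebRn n)" using f by (simp add: Delta_def)
  obtain B where B: "\<And>x. x \<in> Rn n \<Longrightarrow> \<bar>f x\<bar> \<le> B" using f by (auto simp: Delta_def)
  have fin: "\<And>X. rel_separated n X \<Longrightarrow> wseq_norm n w p (\<lambda>k. f (X k)) < \<infinity>" using f by (simp add: Delta_def)
  define Q where "Q k = {y \<in> Rn n. \<forall>i<n. \<lfloor>w * y i\<rfloor> = k i}" for k
  have QG: "(\<lambda>i. if i < n then real_of_int (k i) / w else undefined) \<in> Q k" for k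
    using w by (simp add: Q_def Rn_iff)
  define X where "X k = (SOME y. y \<in> Q k \<and> (\<forall>y'\<in>Q k. \<bar>f y'\<bar> \<le> 2 * \<bar>f y\<bar>))" for k
  have X: "X k \<in> Q k \<and> (\<forall>y'\<in>Q k. \<bar>f y'\<bar> \<le> 2 * \<bar>f (X k)\<bar>)" for k
  proof -
    have ne: "Q k \<noteq> {}" using QG[of k] by blast
    have bd: "\<And>y. y \<in> Q k \<Longrightarrow> \<bar>f y\<bar> \<le> B" using B by (auto simp: Q_def)
    have "\<exists>y\<in>Q k. \<forall>y'\<in>Q k. \<bar>f y'\<bar> \<le> 2 * \<bar>f y\<bar>"
      using exists_half_sup[of "Q k" f B, OF ne bd] by blast
    then show ?thesis
      unfolding X_def by (rule someI2_bex) auto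
  qed
  have rs: "rel_separated n X"
    by (rule rel_sep_grid[OF w]) (use X in \<open>auto simp: Q_def\<close>)
  define K where "K x = (\<lambda>i. if i < n then \<lfloor>w * x i\<rfloor> else undefined)" for x :: "nat \<Rightarrow> real"
  define c where "c k = 2 * f (X k)" for k
  define F where "F x = c (K x)" for x
  have p0: "\<forall>i<n. 0 < p i" using p by (auto intro: less_le_trans[of 0 1])
  have le1: "mixed_norm n p f \<le> mixed_norm n p F"
    unfolding mixed_norm_def
  proof (rule mixed_mono[of n p n])
    fix x :: "nat \<Rightarrow> real" assume x: "\<forall>i\<ge>n. x i = undefined"
    have "x \<in> Q (K x)" using x by (simp add: Q_def Rn_iff K_def)
    then show "\<bar>f x\<bar> \<le> \<bar>F x\<bar>" using X[of "K x"] by (simp add: F_def c_def abs_mult)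
  qed (use p0 in auto)
  have eq: "mixed_norm n p F = wseq_norm n w p c"
    unfolding mixed_norm_def wseq_norm_def
  proof (rule mixed_wseq[OF w, of 0 n n])
    fix x k assume k1: "\<forall>i. 0 \<le> i \<and> i < n \<longrightarrow> k i = \<lfloor>w * x i\<rfloor>" and k2: "\<forall>i. n \<le> i \<longrightarrow> k i = undefined"
    have "K x = k" using k1 k2 by (auto simp: K_def not_less)
    then show "mixed_aux p F 0 x = wseq_aux w p c 0 k" by (simp add: F_def)
  qed auto
  have "wseq_norm n w p c = ennreal 2 * wseq_norm n w p (\<lambda>k. f (X k))"
    unfolding wseq_norm_def c_def using wseq_hom[of n p w 2 "\<lambda>k. f (X k)"] p0 by simp
  also have "\<dots> < \<infinity>" using fin[OF rs] by (simp add: ennreal_mult_less_top)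
  finally show ?thesis using le1 eq fm by (simp add: LP_def)
qed



lemma wseq_delta:
  assumes M: "0 \<le> M" and p: "\<forall>i<n. 0 < p i" and j: "j \<le> n"
  shows "wseq_aux 1 p (\<lambda>k. if \<forall>i<n. k i = 0 then M else 0) j k
       = (if \<forall>i. j \<le> i \<and> i < n \<longrightarrow> k i = 0 then ennreal M else 0)"
  using j
proof (induction j arbitrary: k)
  case 0 then show ?case using M by auto
next
  case (Suc j)
  have jn: "j < n" using Suc.prems by simp
  have pj: "0 < p j" using p jn by simp
  define R where "R = (\<forall>i. Suc j \<le> i \<and> i < n \<longrightarrow> k i = 0)"
  have iff: "(\<forall>i. j \<le> i \<and> i < n \<longrightarrow> (k(j := t)) i = 0) \<longleftrightarrow> t = 0 \<and> R" for t
    using jn by (auto simp: R_def Suc_le_eq)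
  have "(\<integral>\<^sup>+ t. epowr (wseq_aux 1 p (\<lambda>k. if \<forall>i<n. k i = 0 then M else 0) j (k(j := t))) (p j) \<partial>count_space UNIV)
      = (\<integral>\<^sup>+ t. (if R then ennreal (M powr p j) else 0) * indicator {0::int} t \<partial>count_space UNIV)"
  proof (intro nn_integral_cong)
    fix t :: int
    have "wseq_aux 1 p (\<lambda>k. if \<forall>i<n. k i = 0 then M else 0) j (k(j := t))
        = (if (\<forall>i. j \<le> i \<and> i < n \<longrightarrow> (k(j := t)) i = 0) then ennreal M else 0)"
      by (rule Suc.IH) (use jn in simp)
    also have "\<dots> = (if t = 0 \<and> R then ennreal M else 0)" by (simp only: iff)
    finally show "epowr (wseq_aux 1 p (\<lambda>k. if \<forall>i<n. k i = 0 then M else 0) j (k(j := t))) (p j)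
       = (if R then ennreal (M powr p j) else 0) * indicator {0::int} t"
      using M by (simp add: epowr_ennreal split: split_indicator)
  qed
  also have "\<dots> = (if R then ennreal (M powr p j) else 0)"
    by (subst nn_integral_cmult_indicator) auto
  finally show ?case
    using pj M by (auto simp: R_def epowr_ennreal powr_powr)
qed



lemma int_powr_half: "(\<integral>\<^sup>+t. ennreal (indicator {0..1::real} t * t powr (-1/2)) \<partial>lborel) = ennreal 2"
proof -
  have "((\<lambda>t::real. t powr (-1/2)) has_integral (1 powr (-1/2+1) / (-1/2+1))) {0..1}"
    by (rule has_integral_powr_from_0) auto
  then have "((\<lambda>t::real. t powr (-1/2)) has_integral 2) {0..1}" by simp
  from nn_integral_has_integral_lebesgue[OF _ this] show ?thesis by simp
qed

lemma g_level1:
  assumes p0: "1 \<le> p 0" and n: "1 \<le> n"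
  and g: "\<And>x. g x = (if 0 \<le> x 0 \<and> x 0 \<le> 1 then x 0 powr (-1/(2*p 0)) else 0)
                    * (if \<forall>i\<in>{1..<n}. 0 \<le> x i \<and> x i < 1 then 1 else 0)"
  shows "mixed_aux p g 1 x = (if \<forall>i. 1 \<le> i \<and> i < n \<longrightarrow> \<lfloor>x i\<rfloor> = 0 then ennreal (2 powr (1/p 0)) else 0)"
proof -
  define C where "C = (\<forall>i\<in>{1..<n}. 0 \<le> x i \<and> x i < 1)"
  have Ciff: "C \<longleftrightarrow> (\<forall>i. 1 \<le> i \<and> i < n \<longrightarrow> \<lfloor>x i\<rfloor> = 0)"
    by (auto simp: C_def floor_eq_iff)
  have gx: "g (x(0 := t)) = (if 0 \<le> t \<and> t \<le> 1 then t powr (-1/(2*p 0)) else 0) * (if C then 1 else 0)" for t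
    unfolding g C_def by simp
  have m1: "mixed_aux p g 1 x = epowr (\<integral>\<^sup>+t. epowr (ennreal \<bar>g (x(0 := t))\<bar>) (p 0) \<partial>lborel) (1 / p 0)"
    by simp
  show ?thesis
  proof (cases C)
    case False
    have "g (x(0 := t)) = 0" for t by (simp add: gx False)
    then have "mixed_aux p g 1 x = 0" using m1 by simp
    then show ?thesis using Ciff False by simp
  next
    case True
    have "(\<integral>\<^sup>+t. epowr (ennreal \<bar>g (x(0 := t))\<bar>) (p 0) \<partial>lborel)
        = (\<integral>\<^sup>+t. ennreal (indicator {0..1::real} t * t powr (-1/2)) \<partial>lborel)"
    proof (intro nn_integral_cong)
      fix t :: real
      show "epowr (ennreal \<bar>g (x(0 := t))\<bar>) (p 0) = ennreal (indicator {0..1::real} t * t powr (-1/2))"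
      proof (cases "0 \<le> t \<and> t \<le> 1")
        case True
        have "(t powr (-1/(2*p 0))) powr p 0 = t powr (-1/2)"
          using p0 by (simp add: powr_powr)
        then show ?thesis using True \<open>C\<close> by (simp add: gx epowr_ennreal)
      next
        case False
        then show ?thesis by (auto simp: gx)
      qed
    qed
    also have "\<dots> = ennreal 2" by (rule int_powr_half)
    finally have I: "(\<integral>\<^sup>+t. epowr (ennreal \<bar>g (x(0 := t))\<bar>) (p 0) \<partial>lborel) = ennreal 2" .
    have e2: "epowr (ennreal 2) (1 / p 0) = ennreal (2 powr (1 / p 0))" by (rule epowr_ennreal) simp
    show ?thesis using True Ciff by (simp only: m1 I e2) simp
  qed
qed



lemma proper_part:
  assumes n: "n \<ge> 1" and p1: "\<forall>i<n. 1 \<le> p i"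
  shows "\<exists>g\<in>LP n p. \<forall>f\<in>Delta n w p. \<not> (AE x in lebRn n. f x = g x)"
proof -
  have p0: "1 \<le> p 0" using p1 n by auto
  have pp: "\<forall>i<n. 0 < p i" using p1 by (auto intro: less_le_trans[of 0 1])
  define g where "g x = (if 0 \<le> x 0 \<and> x 0 \<le> 1 then x 0 powr (-1/(2*p 0)) else 0)
                    * (if \<forall>i\<in>{1..<n}. 0 \<le> x i \<and> x i < 1 then 1 else 0)" for x :: "nat \<Rightarrow> real"
  define M where "M = 2 powr (1/p 0)"
  have M0: "0 \<le> M" by (simp add: M_def)
  define c where "c k = (if \<forall>i<n. k i = 0 then M else 0)" for k :: "nat \<Rightarrow> int"
  have norm: "mixed_norm n p g = ennreal M"
  proof -
    have "mixed_norm n p g = wseq_aux 1 p c n (\<lambda>_. undefined)"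
      unfolding mixed_norm_def
    proof (rule mixed_wseq[of 1 1 n n])
      fix x :: "nat \<Rightarrow> real" and k :: "nat \<Rightarrow> int" assume k1: "\<forall>i. 1 \<le> i \<and> i < n \<longrightarrow> k i = \<lfloor>1 * x i\<rfloor>"
        and k2: "\<forall>i. n \<le> i \<longrightarrow> k i = undefined"
      have "mixed_aux p g 1 x = (if \<forall>i. 1 \<le> i \<and> i < n \<longrightarrow> \<lfloor>x i\<rfloor> = 0 then ennreal M else 0)"
        unfolding M_def by (rule g_level1[where p=p and n=n, OF p0 n]) (simp add: g_def)
      also have "\<dots> = (if \<forall>i. 1 \<le> i \<and> i < n \<longrightarrow> k i = 0 then ennreal M else 0)"
        using k1 by auto
      also have "\<dots> = wseq_aux 1 p c 1 k"
        unfolding c_def using wseq_delta[OF M0 pp, of 1 k] n by simp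
      finally show "mixed_aux p g 1 x = wseq_aux 1 p c 1 k" .
    qed (use n in auto)
    also have "\<dots> = ennreal M"
      unfolding c_def using wseq_delta[OF M0 pp, of n "\<lambda>_. undefined"] by simp
    finally show ?thesis .
  qed
  have comp: "(\<lambda>x. x i) \<in> measurable (lebRn n) lborel" if "i < n" for i
    unfolding lebRn_def using that by (intro measurable_component_singleton) auto
  have meas: "g \<in> borel_measurable (lebRn n)"
  proof -
    define hf where "hf t = (if 0 \<le> t \<and> t \<le> 1 then t powr (-1/(2*p 0)) else 0)" for t :: real
    have hfm: "hf \<in> borel_measurable borel" unfolding hf_def by measurable
    have c0: "(\<lambda>x. x 0) \<in> borel_measurable (lebRn n)"
      using comp[of 0] n by (simp add: measurable_lborel2)
    have H: "(\<lambda>x. hf (x 0)) \<in> borel_measurable (lebRn n)"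
      by (rule measurable_compose[OF c0 hfm])
    have S: "{x \<in> space (lebRn n). \<forall>i\<in>{1..<n}. 0 \<le> x i \<and> x i < 1} \<in> sets (lebRn n)"
    proof (rule sets.sets_Collect_finite_All)
      fix i assume i: "i \<in> {1..<n}"
      have "(\<lambda>x. x i) -` {0..<1} \<inter> space (lebRn n) \<in> sets (lebRn n)"
        using comp[of i] i by (intro measurable_sets) (auto simp: measurable_lborel2)
      moreover have "{x \<in> space (lebRn n). 0 \<le> x i \<and> x i < 1} = (\<lambda>x. x i) -` {0..<1} \<inter> space (lebRn n)"
        by auto
      ultimately show "{x \<in> space (lebRn n). 0 \<le> x i \<and> x i < 1} \<in> sets (lebRn n)" by simp
    qed simp
    have Ch: "(\<lambda>x. if \<forall>i\<in>{1..<n}. 0 \<le> x i \<and> x i < 1 then 1 else 0 :: real) \<in> borel_measurable (lebRn n)"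
      by (rule measurable_If[OF _ _ S]) auto
    have "(\<lambda>x. hf (x 0) * (if \<forall>i\<in>{1..<n}. 0 \<le> x i \<and> x i < 1 then 1 else 0 :: real)) \<in> borel_measurable (lebRn n)"
      using H Ch by (rule borel_measurable_times)
    moreover have "g = (\<lambda>x. hf (x 0) * (if \<forall>i\<in>{1..<n}. 0 \<le> x i \<and> x i < 1 then 1 else 0 :: real))"
      by (simp add: g_def hf_def fun_eq_iff)
    ultimately show ?thesis by simp
  qed
  have gLP: "g \<in> LP n p" using meas norm by (simp add: LP_def)
  show ?thesis
  proof (intro bexI[OF _ gLP] ballI notI)
    fix f assume f: "f \<in> Delta n w p" and ae: "AE x in lebRn n. f x = g x"
    obtain B where B: "\<forall>x\<in>Rn n. \<bar>f x\<bar> \<le> B" using f by (auto simp: Delta_def)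
    define B' where "B' = max B 1"
    have B'1: "1 \<le> B'" by (simp add: B'_def)
    define \<delta> where "\<delta> = B' powr (-2 * p 0)"
    have \<delta>pos: "0 < \<delta>" using B'1 by (simp add: \<delta>_def)
    have \<delta>1: "\<delta> \<le> 1"
    proof -
      have "B' powr (-2 * p 0) \<le> B' powr 0" using B'1 p0 by (intro powr_mono) auto
      then show ?thesis using B'1 by (simp add: \<delta>_def)
    qed
    have \<delta>pow: "\<delta> powr (-1/(2*p 0)) = B'"
    proof -
      have "(-2 * p 0) * (-1/(2*p 0)) = 1" using p0 by (simp add: field_simps)
      then show ?thesis using B'1 by (simp add: \<delta>_def powr_powr)
    qed
    define A where "A i = (if i = 0 then {0<..<\<delta>} else {0..<1::real})" for i :: nat
    define E where "E = PiE {..<n} A"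
    have Esets: "E \<in> sets (lebRn n)" unfolding E_def lebRn_def
      by (rule sets_PiM_I_finite) (auto simp: A_def)
    have Espace: "E \<subseteq> space (lebRn n)" by (auto simp: E_def lebRn_def space_PiM PiE_iff)
    have gbig: "f x \<noteq> g x" if x: "x \<in> E" for x
    proof -
      have xR: "x \<in> Rn n" using x by (auto simp: E_def Rn_def PiE_iff)
      have "x 0 \<in> A 0" using x n by (auto simp: E_def PiE_iff)
      then have x0: "0 < x 0" "x 0 < \<delta>" by (auto simp: A_def)
      have xi: "\<forall>i\<in>{1..<n}. 0 \<le> x i \<and> x i < 1"
      proof
        fix i assume i: "i \<in> {1..<n}"
        then have "x i \<in> A i" using x by (auto simp: E_def PiE_iff)
        then show "0 \<le> x i \<and> x i < 1" using i by (auto simp: A_def)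
      qed
      have gx: "g x = x 0 powr (-1/(2*p 0))" using x0 \<delta>1 xi by (simp add: g_def)
      have "\<delta> powr (-1/(2*p 0)) < x 0 powr (-1/(2*p 0))"
        using x0 p0 by (intro powr_less_mono2_neg) auto
      then have "B' < g x" using gx \<delta>pow by simp
      moreover have "\<bar>f x\<bar> \<le> B'" using B xR by (auto simp: B'_def)
      ultimately show ?thesis by auto
    qed
    have "AE x in lebRn n. x \<notin> E" using ae by eventually_elim (use gbig in blast)
    then have E0: "emeasure (lebRn n) E = 0"
      using AE_iff_measurable[OF Esets, of "\<lambda>x. x \<notin> E"] Espace by auto
    have ps: "product_sigma_finite (\<lambda>_::nat. lborel::real measure)"
      by (simp add: product_sigma_finite_def sigma_finite_lborel)
    have "emeasure (lebRn n) E = (\<Prod>i\<in>{..<n}. emeasure lborel (A i))"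
      unfolding lebRn_def E_def
      by (rule product_sigma_finite.emeasure_PiM[OF ps]) (auto simp: A_def)
    also have "\<dots> = (\<Prod>i\<in>{..<n}. ennreal (if i = 0 then \<delta> else 1))"
      using \<delta>pos by (intro prod.cong) (auto simp: A_def)
    finally have "emeasure (lebRn n) E \<noteq> 0" using \<delta>pos by auto
    then show False using E0 by simp
  qed
qed


theorem proposition3p3:
  fixes n :: nat and w :: real and p :: "nat \<Rightarrow> real"
  assumes "n \<ge> 1" and "w > 0"
    and "1 \<le> p 0" and "\<And>i j. i \<le> j \<Longrightarrow> j < n \<Longrightarrow> p i \<le> p j"
  shows "Delta n w p \<subseteq> LP n p
    \<and> (\<lambda>x. 0) \<in> Delta n w p
    \<and> (\<forall>f\<in>Delta n w p. \<forall>g\<in>Delta n w p. (\<lambda>x. f x + g x) \<in> Delta n w p)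
    \<and> (\<forall>f\<in>Delta n w p. \<forall>c::real. (\<lambda>x. c * f x) \<in> Delta n w p)
    \<and> (\<exists>g\<in>LP n p. \<forall>f\<in>Delta n w p. \<not> (AE x in lebRn n. f x = g x))
    \<and> (\<forall>f\<in>Delta n w p. delta_norm n w p f < \<infinity>)
    \<and> (\<forall>f\<in>Delta n w p. \<forall>c::real.
          delta_norm n w p (\<lambda>x. c * f x) = ennreal \<bar>c\<bar> * delta_norm n w p f)
    \<and> (\<forall>f\<in>Delta n w p. \<forall>g\<in>Delta n w p.
          delta_norm n w p (\<lambda>x. f x + g x) \<le> delta_norm n w p f + delta_norm n w p g)"
proof -
  have w: "0 < w" using assms(2) .
  have p1: "\<forall>i<n. 1 \<le> p i" using assms(3) assms(4)[of 0] by (auto intro: order_trans)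
  have p0: "\<forall>i<n. 0 < p i" using p1 by (auto intro: less_le_trans[of 0 1])
  have hom: "wseq_norm n w p (\<lambda>k. a * c k) = ennreal \<bar>a\<bar> * wseq_norm n w p c" for a c
    unfolding wseq_norm_def using wseq_hom[where j=n and a=a and c=c and p=p and w=w] p0 by simp
  have tri: "wseq_norm n w p (\<lambda>k. c k + d k) \<le> wseq_norm n w p c + wseq_norm n w p d" for c d
    unfolding wseq_norm_def using wseq_triangle[where j=n and c=c and d=d and p=p and w=w] p1 w by simp
  have grid: "rel_separated n (\<lambda>k i. if i < n then real_of_int (k i) / w else undefined)"
    by (rule rel_sep_grid[OF w]) (use w in \<open>auto simp: Rn_iff\<close>)
  have part1: "Delta n w p \<subseteq> LP n p" using Delta_sub_LP[OF w p1] by blast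
  have part2: "(\<lambda>x. 0) \<in> Delta n w p"
  proof -
    have "wseq_norm n w p (\<lambda>k. 0) = 0" using hom[of 0 "\<lambda>k. 0"] by simp
    then show ?thesis by (auto simp: Delta_def)
  qed
  have part3: "(\<lambda>x. f x + g x) \<in> Delta n w p" if f: "f \<in> Delta n w p" and g: "g \<in> Delta n w p" for f g
  proof -
    obtain B1 where B1: "\<forall>x\<in>Rn n. \<bar>f x\<bar> \<le> B1" using f by (auto simp: Delta_def)
    obtain B2 where B2: "\<forall>x\<in>Rn n. \<bar>g x\<bar> \<le> B2" using g by (auto simp: Delta_def)
    have "\<forall>x\<in>Rn n. \<bar>f x + g x\<bar> \<le> B1 + B2" using B1 B2 by (smt (verit))
    moreover have "wseq_norm n w p (\<lambda>k. f (X k) + g (X k)) < \<infinity>" if "rel_separated n X" for X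
    proof -
      have "wseq_norm n w p (\<lambda>k. f (X k)) < \<infinity>" "wseq_norm n w p (\<lambda>k. g (X k)) < \<infinity>"
        using f g that by (auto simp: Delta_def)
      then have "wseq_norm n w p (\<lambda>k. f (X k)) + wseq_norm n w p (\<lambda>k. g (X k)) < \<infinity>"
        by (simp add: less_top[symmetric] ennreal_add_eq_top)
      then show ?thesis using tri[of "\<lambda>k. f (X k)" "\<lambda>k. g (X k)"] by (rule le_less_trans[rotated])
    qed
    ultimately show ?thesis using f g by (auto simp: Delta_def)
  qed
  have part4: "(\<lambda>x. c * f x) \<in> Delta n w p" if f: "f \<in> Delta n w p" for f c
  proof -
    obtain B1 where B1: "\<forall>x\<in>Rn n. \<bar>f x\<bar> \<le> B1" using f by (auto simp: Delta_def)
    have "\<forall>x\<in>Rn n. \<bar>c * f x\<bar> \<le> \<bar>c\<bar> * B1" using B1 by (simp add: abs_mult mult_left_mono)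
    moreover have "wseq_norm n w p (\<lambda>k. c * f (X k)) < \<infinity>" if "rel_separated n X" for X
    proof -
      have "wseq_norm n w p (\<lambda>k. f (X k)) < \<infinity>" using f that by (auto simp: Delta_def)
      then show ?thesis using hom[of c "\<lambda>k. f (X k)"] by (simp add: ennreal_mult_less_top)
    qed
    ultimately show ?thesis using f by (auto simp: Delta_def)
  qed
  have part6: "delta_norm n w p f < \<infinity>" if f: "f \<in> Delta n w p" for f
    using f grid by (auto simp: Delta_def delta_norm_def)
  have part7: "delta_norm n w p (\<lambda>x. c * f x) = ennreal \<bar>c\<bar> * delta_norm n w p f" for f c
    unfolding delta_norm_def by (rule hom)
  have part8: "delta_norm n w p (\<lambda>x. f x + g x) \<le> delta_norm n w p f + delta_norm n w p g" for f g
    unfolding delta_norm_def by (rule tri)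
  show ?thesis
    using part1 part2 part3 part4 proper_part[OF assms(1) p1, of w] part6 part7 part8 by blast
qed

end
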